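(* In the bilateral multitask setting with action space $\mathbb R_+^d$, suppose the principal's utility $u$ is concave and homogeneous of degree $k_u\in(0,1)$ and the agent's cost $c$ is convex and homogeneous of degree $k_c>1$, and that the maximizers defining $V^*_{\mathsf{FB}}$ and $V^*_{\mathsf{LIN}}$ exist, are interior, and $V^*_{\mathsf{FB}}>0$. Then $$\frac{V^*_{\mathsf{LIN}}}{V^*_{\mathsf{FB}}}=k_c^{-k_u/(k_c-k_u)}.$$
   Context: Bilateral multitask setting: the agent chooses $a\in\mathbb R_+^d$ at cost $c(a)$, the principal has gross benefit $u(a)$, signals have $\mathbb E[x\mid a]=a$, and a linear contract $\phi\in\mathbb R_+^d$ pays $\langle\phi,x\rangle$ and induces the agent's best response $a(\phi)\in\arg\max_a\{\langle\phi,a\rangle-c(a)\}$. Define $V^*_{\mathsf{LIN}}=\max_\phi\{u(a(\phi))-\langle\phi,a(\phi)\rangle\}$ and the first-best value $V^*_{\mathsf{FB}}=\max_a\{u(a)-c(a)\}$. A function $g$ is homogeneous of degree $k$ if $g(\lambda a)=\lambda^kg(a)$ for all $\lambda>0$. *)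

theory Defs
  imports "HOL-Analysis.Analysis"
begin

definition orthant :: "(real ^ 'd) set" where
  "orthant = {a. \<forall>i. 0 \<le> a $ i}"

definition orthant_interior :: "(real ^ 'd) set" where
  "orthant_interior = {a. \<forall>i. 0 < a $ i}"

definition homogeneous_on_orthant :: "real \<Rightarrow> (real ^ 'd \<Rightarrow> real) \<Rightarrow> bool" where
  "homogeneous_on_orthant k g \<longleftrightarrow>
     (\<forall>t>0. \<forall>a\<in>orthant. g (t *\<^sub>R a) = t powr k * g a)"

definition best_response :: "(real ^ 'd \<Rightarrow> real) \<Rightarrow> real ^ 'd \<Rightarrow> real ^ 'd \<Rightarrow> bool" where
  "best_response c \<phi> a \<longleftrightarrow> a \<in> orthant \<and>
     (\<forall>b\<in>orthant. \<phi> \<bullet> b - c b \<le> \<phi> \<bullet> a - c a)"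

end

theory Submission
  imports Defs
begin

lemma orth_scale: "a \<in> orthant \<Longrightarrow> 0 \<le> t \<Longrightarrow> t *\<^sub>R a \<in> orthant"
  by (simp add: orthant_def)

lemma orth_zero: "0 \<in> orthant"
  by (simp add: orthant_def)

lemma hom_zero:
  assumes "homogeneous_on_orthant k g" "k \<noteq> 0"
  shows "g 0 = 0"
proof -
  have H: "\<And>t a. t > 0 \<Longrightarrow> a \<in> orthant \<Longrightarrow> g (t *\<^sub>R a) = t powr k * g a"
    using assms(1) unfolding homogeneous_on_orthant_def by blast
  have "g ((2::real) *\<^sub>R 0) = 2 powr k * g 0"
    using H[of 2 0] orth_zero by simp
  then have "(2 powr k - 1) * g 0 = 0" by (simp add: algebra_simps)
  moreover have "2 powr k \<noteq> (1::real)" using assms(2)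
    by (metis powr_eq_one_iff_gen zero_less_numeral one_less_numeral_iff semiring_norm(76) less_irrefl)
  ultimately show ?thesis by simp
qed

lemma u_nonneg:
  assumes conc: "concave_on orthant u" and hom: "homogeneous_on_orthant ku u"
    and ku: "0 < ku" "ku < 1" and a: "a \<in> orthant"
  shows "u a \<ge> 0"
proof -
  have u0: "u 0 = 0" using hom_zero[OF hom] ku by simp
  have "u ((1 - 1/2) *\<^sub>R 0 + (1/2) *\<^sub>R a) \<ge> (1 - 1/2) * u 0 + (1/2) * u a"
    using concave_onD[OF conc, of "1/2" 0 a] a orth_zero by simp
  then have h: "u ((1/2) *\<^sub>R a) \<ge> (1/2) * u a" using u0 by simp
  have "u ((1/2) *\<^sub>R a) = (1/2) powr ku * u a"
    using hom a unfolding homogeneous_on_orthant_def by simp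
  moreover have "(1/2::real) powr ku > (1/2) powr 1"
    using ku by (intro powr_less_mono') auto
  ultimately have "((1/2::real) powr ku - 1/2) * u a \<ge> 0" using h by (simp add: algebra_simps)
  moreover have "(1/2::real) powr ku - 1/2 > 0" using \<open>(1/2::real) powr ku > (1/2) powr 1\<close> by simp
  ultimately show ?thesis by (simp add: zero_le_mult_iff)
qed

lemma agent_euler:
  assumes hom: "homogeneous_on_orthant kc c" and br: "best_response c \<phi> a"
  shows "\<phi> \<bullet> a = kc * c a"
proof -
  define P where "P = \<phi> \<bullet> a"
  define C where "C = c a"
  have a: "a \<in> orthant" using br by (simp add: best_response_def)
  define f where "f = (\<lambda>t::real. t * P - t powr kc * C)"
  have le: "f y \<le> f 1" if "\<bar>1 - y\<bar> < 1" for y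
  proof -
    have y: "y > 0" using that by linarith
    have "\<phi> \<bullet> (y *\<^sub>R a) - c (y *\<^sub>R a) \<le> \<phi> \<bullet> a - c a"
      using br orth_scale[OF a less_imp_le[OF y]] unfolding best_response_def by blast
    moreover have "c (y *\<^sub>R a) = y powr kc * c a"
      using hom a y unfolding homogeneous_on_orthant_def by simp
    ultimately show ?thesis by (simp add: f_def P_def C_def)
  qed
  have d: "(f has_real_derivative (1 * P - kc * 1 powr (kc - 1) * C)) (at 1)"
    unfolding f_def
    by (intro derivative_eq_intros has_real_derivative_powr) auto
  have "1 * P - kc * 1 powr (kc - 1) * C = 0"
    by (rule DERIV_local_max[OF d, of 1]) (use le in auto)
  then show ?thesis by (simp add: P_def C_def)
qed

lemma br_scale:
  assumes hom: "homogeneous_on_orthant kc c" and br: "best_response c \<phi> a" and s: "s > 0"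
  shows "best_response c (s powr (kc - 1) *\<^sub>R \<phi>) (s *\<^sub>R a)"
proof -
  have H: "\<And>t a. t > 0 \<Longrightarrow> a \<in> orthant \<Longrightarrow> c (t *\<^sub>R a) = t powr kc * c a"
    using hom unfolding homogeneous_on_orthant_def by blast
  have a: "a \<in> orthant" using br by (simp add: best_response_def)
  have sp: "s powr (kc - 1) * s = s powr kc"
    using s by (simp add: powr_diff)
  have "(s powr (kc - 1) *\<^sub>R \<phi>) \<bullet> b - c b
      \<le> (s powr (kc - 1) *\<^sub>R \<phi>) \<bullet> (s *\<^sub>R a) - c (s *\<^sub>R a)" if b: "b \<in> orthant" for b
  proof -
    define b' where "b' = (1/s) *\<^sub>R b"
    have b': "b' \<in> orthant" using b s by (simp add: b'_def orth_scale)
    have bb: "b = s *\<^sub>R b'" using s by (simp add: b'_def)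
    have "\<phi> \<bullet> b' - c b' \<le> \<phi> \<bullet> a - c a" using br b' by (simp add: best_response_def)
    then have "s powr kc * (\<phi> \<bullet> b' - c b') \<le> s powr kc * (\<phi> \<bullet> a - c a)"
      by (simp add: mult_left_mono)
    moreover have "(s powr (kc - 1) *\<^sub>R \<phi>) \<bullet> b - c b = s powr kc * (\<phi> \<bullet> b' - c b')"
      unfolding bb using H[OF s b'] sp by (simp add: algebra_simps)
    moreover have "(s powr (kc - 1) *\<^sub>R \<phi>) \<bullet> (s *\<^sub>R a) - c (s *\<^sub>R a) = s powr kc * (\<phi> \<bullet> a - c a)"
      using H[OF s a] sp by (simp add: algebra_simps)
    ultimately show ?thesis by simp
  qed
  then show ?thesis using orth_scale[OF a less_imp_le[OF s]] by (simp add: best_response_def)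
qed

lemma orth_add: "a \<in> orthant \<Longrightarrow> b \<in> orthant \<Longrightarrow> a + b \<in> orthant"
  by (simp add: orthant_def)

lemma pos_comb: "(p::real) > 0 \<Longrightarrow> q > 0 \<Longrightarrow> m \<ge> 0 \<Longrightarrow> n \<ge> 0 \<Longrightarrow> m + n = 1 \<Longrightarrow> m * p + n * q > 0"
  by (smt (verit) mult_nonneg_nonneg mult_pos_pos)

lemma implement_FB:
  fixes u c :: "real ^ 'd \<Rightarrow> real" and aFB :: "real ^ 'd"
  assumes conc: "concave_on orthant u" and hom: "homogeneous_on_orthant ku u"
    and ku: "0 < ku" "ku < 1" and conv: "convex_on orthant c"
    and aFB: "aFB \<in> orthant"
    and FB_max: "\<forall>a\<in>orthant. u a - c a \<le> u aFB - c aFB"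
  shows "\<exists>\<phi>\<in>orthant. best_response c \<phi> aFB"
proof -
  define S :: "((real ^ 'd) \<times> real) set" where "S = {(b,y). b \<in> orthant \<and> y > c b - c aFB}"
  define T :: "((real ^ 'd) \<times> real) set" where "T = {(b,y). b \<in> orthant \<and> y \<le> u b - u aFB}"
  have cS: "convex S"
    unfolding convex_def
  proof (intro ballI allI impI)
    fix x z :: "(real ^ 'd) \<times> real" and m n :: real
    assume x: "x \<in> S" and z: "z \<in> S" and mn: "0 \<le> m" "0 \<le> n" "m + n = 1"
    obtain b1 y1 where x': "x = (b1, y1)" "b1 \<in> orthant" "y1 > c b1 - c aFB" using x S_def by auto
    obtain b2 y2 where z': "z = (b2, y2)" "b2 \<in> orthant" "y2 > c b2 - c aFB" using z S_def by auto
    have m: "m = 1 - n" using mn by simp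
    have cc: "c (m *\<^sub>R b1 + n *\<^sub>R b2) \<le> m * c b1 + n * c b2"
      using convex_onD[OF conv, of n b1 b2] x'(2) z'(2) mn unfolding m by simp
    have "m * (y1 - (c b1 - c aFB)) + n * (y2 - (c b2 - c aFB)) > 0"
      using pos_comb x'(3) z'(3) mn by simp
    moreover have "m * (y1 - (c b1 - c aFB)) + n * (y2 - (c b2 - c aFB)) = m*y1 + n*y2 - (m * c b1 + n * c b2) + (m+n) * c aFB"
      by (simp add: algebra_simps)
    ultimately have "m * y1 + n * y2 > c (m *\<^sub>R b1 + n *\<^sub>R b2) - c aFB"
      using cc mn(3) by simp
    moreover have "m *\<^sub>R b1 + n *\<^sub>R b2 \<in> orthant"
      using orth_add orth_scale x'(2) z'(2) mn by blast
    ultimately show "m *\<^sub>R x + n *\<^sub>R z \<in> S" using x'(1) z'(1) S_def by simp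
  qed
  have cT: "convex T"
    unfolding convex_def
  proof (intro ballI allI impI)
    fix x z :: "(real ^ 'd) \<times> real" and m n :: real
    assume x: "x \<in> T" and z: "z \<in> T" and mn: "0 \<le> m" "0 \<le> n" "m + n = 1"
    obtain b1 y1 where x': "x = (b1, y1)" "b1 \<in> orthant" "y1 \<le> u b1 - u aFB" using x T_def by auto
    obtain b2 y2 where z': "z = (b2, y2)" "b2 \<in> orthant" "y2 \<le> u b2 - u aFB" using z T_def by auto
    have m: "m = 1 - n" using mn by simp
    have cc: "u (m *\<^sub>R b1 + n *\<^sub>R b2) \<ge> m * u b1 + n * u b2"
      using concave_onD[OF conc, of n b1 b2] x'(2) z'(2) mn unfolding m by simp
    have "m * y1 \<le> m * (u b1 - u aFB)" "n * y2 \<le> n * (u b2 - u aFB)"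
      using x'(3) z'(3) mn by (simp_all add: mult_left_mono)
    moreover have "m * (u b1 - u aFB) + n * (u b2 - u aFB) = (m * u b1 + n * u b2) - (m+n) * u aFB"
      by (simp add: algebra_simps)
    ultimately have "m * y1 + n * y2 \<le> u (m *\<^sub>R b1 + n *\<^sub>R b2) - u aFB"
      using cc mn(3) by simp
    moreover have "m *\<^sub>R b1 + n *\<^sub>R b2 \<in> orthant"
      using orth_add orth_scale x'(2) z'(2) mn by blast
    ultimately show "m *\<^sub>R x + n *\<^sub>R z \<in> T" using x'(1) z'(1) T_def by simp
  qed
  have aS: "(aFB, 1) \<in> S" using aFB S_def by simp
  have aT: "(aFB, 0) \<in> T" using aFB T_def by simp
  have dST: "S \<inter> T = {}"
  proof (rule ccontr)
    assume "S \<inter> T \<noteq> {}"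
    then obtain b y where "b \<in> orthant" "y > c b - c aFB" "y \<le> u b - u aFB"
      unfolding S_def T_def by auto
    then show False using FB_max by force
  qed
  obtain w \<beta> where w: "w \<noteq> 0" and wS: "\<forall>x\<in>S. inner w x \<le> \<beta>" and wT: "\<forall>x\<in>T. inner w x \<ge> \<beta>"
    using separating_hyperplane_sets[OF cS cT _ _ dST] aS aT by blast
  obtain \<psi> \<mu> where wpm: "w = (\<psi>, \<mu>)" by (cases w)
  have Sb: "\<psi> \<bullet> b + \<mu> * y \<le> \<beta>" if "b \<in> orthant" "y > c b - c aFB" for b y
    using wS that unfolding S_def wpm by auto
  have Tb: "\<psi> \<bullet> b + \<mu> * y \<ge> \<beta>" if "b \<in> orthant" "y \<le> u b - u aFB" for b y
    using wT that unfolding T_def wpm by auto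
  have b0: "\<psi> \<bullet> aFB \<ge> \<beta>" using Tb[OF aFB, of 0] by simp
  have mu_le: "\<mu> \<le> 0"
  proof (rule ccontr)
    assume "\<not> \<mu> \<le> 0"
    then have "\<psi> \<bullet> aFB + \<mu> * 1 > \<beta>" using b0 by simp
    then show False using Sb[OF aFB, of 1] by simp
  qed
  have mu_ne: "\<mu> \<noteq> 0"
  proof
    assume mu0: "\<mu> = 0"
    have eq: "\<psi> \<bullet> b = \<beta>" if "b \<in> orthant" for b
      using Sb[OF that, of "c b - c aFB + 1"] Tb[OF that, of "u b - u aFB"] mu0 by simp
    have "\<beta> = 0" using eq[OF orth_zero] by simp
    have "\<psi> $ i = 0" for i
    proof -
      have "axis i 1 \<in> orthant" by (simp add: orthant_def axis_def)
      then have "\<psi> \<bullet> axis i 1 = 0" using eq \<open>\<beta> = 0\<close> by simp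
      then show ?thesis by (simp add: inner_axis)
    qed
    then have "\<psi> = 0" by (simp add: vec_eq_iff)
    then show False using w wpm mu0 by (simp add: zero_prod_def)
  qed
  define l where "l = - \<mu>"
  have l: "l > 0" using mu_le mu_ne l_def by simp
  have Sb2: "\<psi> \<bullet> b - l * (c b - c aFB) \<le> \<beta>" if b: "b \<in> orthant" for b
  proof (rule field_le_epsilon)
    fix e :: real assume e: "e > 0"
    have "\<psi> \<bullet> b + \<mu> * (c b - c aFB + e / l) \<le> \<beta>" using Sb[OF b, of "c b - c aFB + e / l"] e l by simp
    then show "\<psi> \<bullet> b - l * (c b - c aFB) \<le> \<beta> + e" using l unfolding l_def by (simp add: algebra_simps)
  qed
  have beq: "\<beta> = \<psi> \<bullet> aFB" using Sb2[OF aFB] b0 by simp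
  define \<phi> where "\<phi> = (1 / l) *\<^sub>R \<psi>"
  have br: "best_response c \<phi> aFB"
    unfolding best_response_def
  proof (intro conjI ballI aFB)
    fix b :: "real ^ 'd" assume b: "b \<in> orthant"
    have "\<psi> \<bullet> b - l * c b \<le> \<psi> \<bullet> aFB - l * c aFB" using Sb2[OF b] beq by (simp add: algebra_simps)
    then have "(1/l) * (\<psi> \<bullet> b - l * c b) \<le> (1/l) * (\<psi> \<bullet> aFB - l * c aFB)"
      using l by (simp add: divide_right_mono)
    then show "\<phi> \<bullet> b - c b \<le> \<phi> \<bullet> aFB - c aFB" using l unfolding \<phi>_def by (simp add: algebra_simps)
  qed
  have Tb2: "\<psi> \<bullet> b - l * (u b - u aFB) \<ge> \<psi> \<bullet> aFB" if b: "b \<in> orthant" for b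
    using Tb[OF b, of "u b - u aFB"] beq l_def by simp
  have psi_nn: "\<psi> $ i \<ge> 0" for i
  proof (rule ccontr)
    assume neg: "\<not> \<psi> $ i \<ge> 0"
    define N where "N = l * u aFB / (- \<psi> $ i) + 1"
    have u0: "u aFB \<ge> 0" using u_nonneg[OF conc hom ku aFB] .
    have "l * u aFB / (- \<psi> $ i) \<ge> 0" using neg u0 l by (intro divide_nonneg_pos) auto
    then have N: "N > 0" unfolding N_def by linarith
    define b where "b = aFB + N *\<^sub>R axis i 1"
    have ax: "axis i 1 \<in> orthant" by (simp add: orthant_def axis_def)
    have b: "b \<in> orthant" unfolding b_def using orth_add[OF aFB orth_scale[OF ax]] N by simp
    have ub: "u b \<ge> 0" using u_nonneg[OF conc hom ku b] .
    have "\<psi> \<bullet> b = \<psi> \<bullet> aFB + N * \<psi> $ i" unfolding b_def by (simp add: inner_add_right inner_axis)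
    then have "N * \<psi> $ i \<ge> l * (u b - u aFB)" using Tb2[OF b] by simp
    moreover have "l * (u b - u aFB) \<ge> - l * u aFB" using ub l by (simp add: algebra_simps)
    moreover have "N * \<psi> $ i = - l * u aFB + \<psi> $ i" using neg unfolding N_def by (simp add: field_simps)
    ultimately show False using neg by simp
  qed
  have "\<phi> \<in> orthant" using psi_nn l unfolding \<phi>_def orthant_def by simp
  then show ?thesis using br by blast
qed

theorem mainTheorem8:
  fixes u c :: "real ^ 'd \<Rightarrow> real" and ku kc :: real
    and aFB aLIN \<phi>LIN :: "real ^ 'd"
  assumes ku: "0 < ku" "ku < 1" and kc: "1 < kc"
    and u_concave: "concave_on orthant u" and u_hom: "homogeneous_on_orthant ku u"
    and c_convex: "convex_on orthant c" and c_hom: "homogeneous_on_orthant kc c"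
    and FB_int: "aFB \<in> orthant_interior"
    and FB_max: "\<forall>a\<in>orthant. u a - c a \<le> u aFB - c aFB"
    and FB_pos: "u aFB - c aFB > 0"
    and LIN_contract: "\<phi>LIN \<in> orthant"
    and LIN_br: "best_response c \<phi>LIN aLIN"
    and LIN_int: "aLIN \<in> orthant_interior"
    and LIN_max: "\<forall>\<phi>\<in>orthant. \<forall>a. best_response c \<phi> a \<longrightarrow>
                    u a - \<phi> \<bullet> a \<le> u aLIN - \<phi>LIN \<bullet> aLIN"
  shows "(u aLIN - \<phi>LIN \<bullet> aLIN) / (u aFB - c aFB) = kc powr (- ku / (kc - ku))"
proof -
  have Hu: "\<And>t a. t > 0 \<Longrightarrow> a \<in> orthant \<Longrightarrow> u (t *\<^sub>R a) = t powr ku * u a"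
    using u_hom unfolding homogeneous_on_orthant_def by blast
  have Hc: "\<And>t a. t > 0 \<Longrightarrow> a \<in> orthant \<Longrightarrow> c (t *\<^sub>R a) = t powr kc * c a"
    using c_hom unfolding homogeneous_on_orthant_def by blast
  have aFB: "aFB \<in> orthant" using FB_int by (auto simp: orthant_def orthant_interior_def less_imp_le)
  have aL: "aLIN \<in> orthant" using LIN_br by (simp add: best_response_def)
  define s where "s = kc powr (- 1 / (kc - ku))"
  have s: "s > 0" using kc by (simp add: s_def)
  have sku: "s powr ku = kc powr (- ku / (kc - ku))"
    unfolding s_def using kc by (simp add: powr_powr)
  have skk: "s powr (kc - ku) = 1 / kc"
  proof -
    have "s powr (kc - ku) = kc powr (- 1 / (kc - ku) * (kc - ku))" unfolding s_def by (rule powr_powr)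
    also have "- 1 / (kc - ku) * (kc - ku) = - 1" using kc ku by simp
    also have "kc powr (- 1) = 1 / kc" using kc by (simp add: powr_minus_divide)
    finally show ?thesis .
  qed
  have kcs: "kc * s powr kc = s powr ku"
  proof -
    have "s powr kc = s powr (kc - ku) * s powr ku" using s by (simp add: powr_add[symmetric])
    then show ?thesis using skk kc by simp
  qed
  define VL where "VL = u aLIN - \<phi>LIN \<bullet> aLIN"
  define VF where "VF = u aFB - c aFB"
  have upper: "VL \<le> s powr ku * VF"
  proof -
    define a' where "a' = (1/s) *\<^sub>R aLIN"
    have a': "a' \<in> orthant" using aL s by (simp add: a'_def orth_scale)
    have aa: "aLIN = s *\<^sub>R a'" using s by (simp add: a'_def)
    have "VL = u aLIN - kc * c aLIN" using agent_euler[OF c_hom LIN_br] VL_def by simp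
    also have "\<dots> = s powr ku * u a' - kc * s powr kc * c a'"
      unfolding aa using Hu[OF s a'] Hc[OF s a'] by simp
    also have "\<dots> = s powr ku * (u a' - c a')" using kcs by (simp add: algebra_simps)
    also have "\<dots> \<le> s powr ku * VF" using FB_max a' VF_def by (simp add: mult_left_mono)
    finally show ?thesis .
  qed
  obtain \<phi>F where \<phi>F: "\<phi>F \<in> orthant" "best_response c \<phi>F aFB"
    using implement_FB[OF u_concave u_hom ku c_convex aFB FB_max] by blast
  define \<phi>2 where "\<phi>2 = s powr (kc - 1) *\<^sub>R \<phi>F"
  have br2: "best_response c \<phi>2 (s *\<^sub>R aFB)" using br_scale[OF c_hom \<phi>F(2) s] \<phi>2_def by simp
  have p2: "\<phi>2 \<in> orthant" using \<phi>F(1) s by (simp add: \<phi>2_def orth_scale)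
  have lower: "s powr ku * VF \<le> VL"
  proof -
    have "s powr ku * VF = s powr ku * u aFB - kc * s powr kc * c aFB"
      unfolding VF_def kcs[symmetric] by (simp add: algebra_simps)
    also have "\<dots> = u (s *\<^sub>R aFB) - kc * c (s *\<^sub>R aFB)"
      using Hu[OF s aFB] Hc[OF s aFB] by simp
    also have "\<dots> = u (s *\<^sub>R aFB) - \<phi>2 \<bullet> (s *\<^sub>R aFB)"
      using agent_euler[OF c_hom br2] by simp
    also have "\<dots> \<le> VL" using LIN_max p2 br2 VL_def by blast
    finally show ?thesis .
  qed
  have "VL = s powr ku * VF" using upper lower by simp
  then show ?thesis using FB_pos sku VL_def VF_def by simp
qed

end
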